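(* Let $T$ be a tabloid whose $k$-th and $(k+1)$-st rows have the same size $m$. Then $\operatorname{lch}^o_k(T)=\operatorname{lch}_k(T)$ for every activation ordering $o$.
   Context: Fix $n\ge1$; $\overline i=i+n\mathbb Z$, $[\overline n]=\{\overline1,\dots,\overline n\}$. A tabloid is a sequence of pairwise disjoint subsets (rows) $T_1,T_2,\dots$ of $[\overline n]$. Broken order: $\overline1<\overline2<\dots<\overline n$. An activation ordering for rows $k,k+1$ is a bijection $o:[m]\to T_k$. The charge matching with ordering $o$: for $t=1,\dots,m$ in turn, match $o(t)$ with the smallest (broken order) not yet matched element of $T_{k+1}$ that is larger than $o(t)$, if one exists; otherwise with the smallest not yet matched element of $T_{k+1}$. $\operatorname{lch}^o_k(T)$ is the number of elements $\overline a\in T_k$ matched with some $\overline b$ satisfying $\overline a>\overline b$ (broken order). $\operatorname{lch}_k(T)$ denotes $\operatorname{lch}^{o}_k(T)$ for the standard ordering $o$, which lists $T_k$ in increasing broken order. *)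

theory Defs
  imports Main
begin

text \<open>Residues \<open>i + nZ\<close> in [n] are represented by the naturals 1..n; the broken order
  1 < 2 < ... < n is then the usual order on nat.\<close>

definition tabloid :: "nat \<Rightarrow> (nat \<Rightarrow> nat set) \<Rightarrow> bool" where
  "tabloid n T \<longleftrightarrow> (\<forall>i\<ge>1. T i \<subseteq> {1..n}) \<and>
     (\<forall>i\<ge>1. \<forall>j\<ge>1. i \<noteq> j \<longrightarrow> T i \<inter> T j = {})"

text \<open>Charge matching: process the elements of row k in the given order; B is the set
  of not yet matched elements of row k+1. Returns the number of elements a matched with
  some b with a > b.\<close>

fun charge_count :: "nat list \<Rightarrow> nat set \<Rightarrow> nat" where
  "charge_count [] B = 0"
| "charge_count (a # as) B =
     (if {b \<in> B. a < b} \<noteq> {} then charge_count as (B - {Min {b \<in> B. a < b}})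
      else if B \<noteq> {} then (if Min B < a then 1 else 0) + charge_count as (B - {Min B})
      else charge_count as B)"

definition activation_ordering :: "(nat \<Rightarrow> nat set) \<Rightarrow> nat \<Rightarrow> (nat \<Rightarrow> nat) \<Rightarrow> bool" where
  "activation_ordering T k act \<longleftrightarrow> bij_betw act {1..card (T k)} (T k)"

definition lch_ord :: "(nat \<Rightarrow> nat set) \<Rightarrow> nat \<Rightarrow> (nat \<Rightarrow> nat) \<Rightarrow> nat" where
  "lch_ord T k act = charge_count (map act [1..<card (T k) + 1]) (T (Suc k))"

definition lch :: "(nat \<Rightarrow> nat set) \<Rightarrow> nat \<Rightarrow> nat" where
  "lch T k = charge_count (sorted_list_of_set (T k)) (T (Suc k))"

end

theory Submission
  imports Defs
begin

definition hh :: "nat set \<Rightarrow> nat set \<Rightarrow> nat \<Rightarrow> int" where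
  "hh A B x = int (card (B \<inter> {..<x})) - int (card (A \<inter> {..<x}))"

lemma card_ins_lt:
  assumes "finite A" "a \<notin> A"
  shows "card (insert a A \<inter> {..<x}) = card (A \<inter> {..<x}) + (if a < x then 1 else 0)"
proof (cases "a < x")
  case True
  then have "insert a A \<inter> {..<x} = insert a (A \<inter> {..<x})" by auto
  then show ?thesis using assms True by simp
next
  case False
  then have "insert a A \<inter> {..<x} = A \<inter> {..<x}" by auto
  then show ?thesis using False by simp
qed

lemma card_rem_lt:
  assumes "finite B" "b \<in> B"
  shows "int (card ((B - {b}) \<inter> {..<x})) = int (card (B \<inter> {..<x})) - (if b < x then 1 else 0)"
proof (cases "b < x")
  case True
  then have "(B - {b}) \<inter> {..<x} = (B \<inter> {..<x}) - {b}" by auto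
  moreover have "b \<in> B \<inter> {..<x}" using True assms by auto
  moreover have "card (B \<inter> {..<x}) \<ge> 1" using calculation assms
    by (metis One_nat_def Suc_leI card_gt_0_iff empty_iff finite_Int)
  ultimately show ?thesis using assms True by simp
next
  case False
  then have "(B - {b}) \<inter> {..<x} = B \<inter> {..<x}" by auto
  then show ?thesis using False by simp
qed

lemma hh_step:
  assumes "finite A" "a \<notin> A" "finite B" "b \<in> B"
  shows "hh A (B - {b}) x = hh (insert a A) B x + (if a < x then 1 else 0) - (if b < x then 1 else 0)"
  using card_ins_lt[OF assms(1,2), of x] card_rem_lt[OF assms(3,4), of x]
  unfolding hh_def by simp

lemma card_lt_strict:
  fixes A' :: "nat set"
  assumes "finite A'" "a \<in> A'" "a < x"
  shows "card (A' \<inter> {..<a}) + 1 \<le> card (A' \<inter> {..<x})"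
proof -
  have "insert a (A' \<inter> {..<a}) \<subseteq> A' \<inter> {..<x}" using assms by auto
  then have "card (insert a (A' \<inter> {..<a})) \<le> card (A' \<inter> {..<x})"
    using assms(1) by (intro card_mono) auto
  then show ?thesis using assms by simp
qed

lemma main:
  "distinct as \<Longrightarrow> finite B \<Longrightarrow> length as = card B \<Longrightarrow> set as \<inter> B = {} \<Longrightarrow>
   (\<forall>y\<in>set as \<union> B. y < K) \<Longrightarrow> (\<forall>x\<le>K. hh (set as) B x \<le> M) \<Longrightarrow>
   (\<exists>x\<le>K. hh (set as) B x = M) \<Longrightarrow> int (charge_count as B) = M"
proof (induction as arbitrary: B M)
  case Nil
  then have "B = {}" by simp
  then show ?case using Nil by (auto simp: hh_def)
next
  case (Cons a as)
  let ?A = "set as"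
  let ?A' = "insert a ?A"
  have fA: "finite ?A" by simp
  have aA: "a \<notin> ?A" using Cons by simp
  have aB: "a \<notin> B" using Cons.prems by auto
  have aK: "a \<le> K" using Cons.prems(5) by auto
  have cardA': "card ?A' = card B" using Cons.prems aA by (simp add: distinct_card)
  show ?case
  proof (cases "{b \<in> B. a < b} \<noteq> {}")
    case True
    define b' where "b' = Min {b \<in> B. a < b}"
    have b'S: "b' \<in> {b \<in> B. a < b}" unfolding b'_def using True Cons.prems(2) by (intro Min_in) auto
    have b'min: "\<And>b. b \<in> B \<Longrightarrow> a < b \<Longrightarrow> b' \<le> b" unfolding b'_def using Cons.prems(2) by (intro Min_le) auto
    have eq: "\<And>x. hh ?A (B - {b'}) x = hh ?A' B x + (if a < x then 1 else 0) - (if b' < x then 1 else 0)"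
      using hh_step[OF fA aA Cons.prems(2)] b'S by auto
    have cc: "charge_count (a # as) B = charge_count as (B - {b'})"
      using True b'_def by simp
    have hmax: "\<forall>x\<le>K. hh ?A (B - {b'}) x \<le> M"
    proof (intro allI impI)
      fix x assume xK: "x \<le> K"
      show "hh ?A (B - {b'}) x \<le> M"
      proof (cases "a < x \<and> \<not> b' < x")
        case True
        have "B \<inter> {..<x} = B \<inter> {..<a}"
        proof safe
          fix b assume "b \<in> B" "b < x"
          show "b < a"
          proof (rule ccontr)
            assume "\<not> b < a"
            then have "a < b" using aB \<open>b \<in> B\<close> by (cases "a = b") auto
            then have "b' \<le> b" using b'min \<open>b \<in> B\<close> by auto
            then show False using True \<open>b < x\<close> by auto
          qed
        next
          fix b assume "b < a" then show "b < x" using True by auto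
        qed
        moreover have "card (?A' \<inter> {..<a}) + 1 \<le> card (?A' \<inter> {..<x})"
          using card_lt_strict[of ?A' a x] True by auto
        ultimately have "hh ?A' B x + 1 \<le> hh ?A' B a" unfolding hh_def by simp
        moreover have "hh ?A (B - {b'}) a = hh ?A' B a" using eq[of a] b'S by auto
        moreover have "hh ?A' B a \<le> M" using Cons.prems(6) aK by simp
        ultimately show ?thesis using eq[of x] True by simp
      next
        case False
        then have "hh ?A (B - {b'}) x \<le> hh ?A' B x" using eq[of x] b'S by auto
        then show ?thesis using Cons.prems(6) xK by (smt (verit) list.set(2))
      qed
    qed
    obtain x0 where x0: "x0 \<le> K" "hh ?A' B x0 = M" using Cons.prems(7) by auto
    have "hh ?A (B - {b'}) x0 \<ge> hh ?A' B x0" using eq[of x0] b'S by auto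
    then have ex: "\<exists>x\<le>K. hh ?A (B - {b'}) x = M" using hmax x0 by force
    have "int (charge_count as (B - {b'})) = M"
      apply (rule Cons.IH)
      using Cons.prems b'S hmax ex by (auto simp: card_Diff_singleton)
    then show ?thesis using cc by simp
  next
    case False
    then have allb: "\<And>b. b \<in> B \<Longrightarrow> b < a" using aB by (metis (mono_tags, lifting) empty_iff linorder_neqE_nat mem_Collect_eq)
    have Bne: "B \<noteq> {}" using Cons.prems(3) by auto
    define b' where "b' = Min B"
    have b'B: "b' \<in> B" unfolding b'_def using Bne Cons.prems(2) by simp
    have b'min: "\<And>b. b \<in> B \<Longrightarrow> b' \<le> b" unfolding b'_def using Cons.prems(2) by simp
    have b'a: "b' < a" using allb b'B by simp
    have cc: "charge_count (a # as) B = 1 + charge_count as (B - {b'})"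
      using False Bne b'_def b'a by simp
    have eq: "\<And>x. hh ?A (B - {b'}) x = hh ?A' B x + (if a < x then 1 else 0) - (if b' < x then 1 else 0)"
      using hh_step[OF fA aA Cons.prems(2)] b'B by auto
    have Ba: "B \<inter> {..<a} = B" using allb by auto
    have c1: "card (?A' \<inter> {..<a}) + 1 \<le> card ?A'"
    proof -
      have "?A' \<inter> {..<a} \<subseteq> ?A' - {a}" by auto
      then have "card (?A' \<inter> {..<a}) \<le> card (?A' - {a})" by (intro card_mono) auto
      then show ?thesis using aA by simp
    qed
    have outside: "\<And>x. x \<le> b' \<or> a < x \<Longrightarrow> hh ?A' B x \<le> hh ?A' B a - 1"
    proof -
      fix x assume "x \<le> b' \<or> a < x"
      then show "hh ?A' B x \<le> hh ?A' B a - 1"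
      proof
        assume "x \<le> b'"
        then have "B \<inter> {..<x} = {}" using b'min by force
        then show ?thesis using c1 cardA' Ba unfolding hh_def by simp
      next
        assume ax: "a < x"
        then have "B \<inter> {..<x} = B" using allb by force
        moreover have "card (?A' \<inter> {..<a}) + 1 \<le> card (?A' \<inter> {..<x})"
          using card_lt_strict[of ?A' a x] ax by auto
        ultimately show ?thesis using Ba unfolding hh_def by simp
      qed
    qed
    have haM: "hh ?A' B a \<le> M" using Cons.prems(6) aK by simp
    have hmax: "\<forall>x\<le>K. hh ?A (B - {b'}) x \<le> M - 1"
    proof (intro allI impI)
      fix x assume xK: "x \<le> K"
      show "hh ?A (B - {b'}) x \<le> M - 1"
      proof (cases "b' < x \<and> x \<le> a")
        case True
        have "hh ?A' B x \<le> M" using Cons.prems(6) xK by simp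
        then show ?thesis using eq[of x] True by simp
      next
        case False
        then have "x \<le> b' \<or> a < x" by auto
        then show ?thesis using outside[of x] eq[of x] haM b'a by auto
      qed
    qed
    obtain x0 where x0: "x0 \<le> K" "hh ?A' B x0 = M" using Cons.prems(7) by auto
    have "b' < x0 \<and> x0 \<le> a"
    proof (rule ccontr)
      assume "\<not> (b' < x0 \<and> x0 \<le> a)"
      then have "hh ?A' B x0 \<le> hh ?A' B a - 1" using outside by auto
      then show False using x0 haM by simp
    qed
    then have "hh ?A (B - {b'}) x0 = M - 1" using eq[of x0] x0 by simp
    then have ex: "\<exists>x\<le>K. hh ?A (B - {b'}) x = M - 1" using x0 by auto
    have "int (charge_count as (B - {b'})) = M - 1"
      apply (rule Cons.IH)
      using Cons.prems b'B hmax ex by (auto simp: card_Diff_singleton)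
    then show ?thesis using cc by simp
  qed
qed

lemma main2:
  assumes "distinct as" "distinct bs" "set as = set bs" "finite B" "length as = card B"
    "set as \<inter> B = {}" "\<forall>y\<in>set as \<union> B. y < K"
  shows "charge_count as B = charge_count bs B"
proof -
  define M where "M = Max (hh (set as) B ` {..K})"
  have 1: "\<forall>x\<le>K. hh (set as) B x \<le> M" unfolding M_def by (auto intro: Max_ge)
  have "M \<in> hh (set as) B ` {..K}" unfolding M_def by (intro Max_in) auto
  then have 2: "\<exists>x\<le>K. hh (set as) B x = M" by auto
  have lb: "length bs = card B" using assms distinct_card by metis
  have "int (charge_count as B) = M" using main[OF assms(1,4,5,6,7) 1 2] .
  moreover have "int (charge_count bs B) = M"
    using main[OF assms(2,4) lb] assms 1 2 by auto
  ultimately show ?thesis by simp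
qed

theorem lemma5p5:
  fixes n k m :: nat and T :: "nat \<Rightarrow> nat set" and act :: "nat \<Rightarrow> nat"
  assumes "n \<ge> 1" and "tabloid n T" and "k \<ge> 1"
    and "card (T k) = m" and "card (T (Suc k)) = m"
    and "activation_ordering T k act"
  shows "lch_ord T k act = lch T k"
proof -
  have sub1: "T k \<subseteq> {1..n}" and sub2: "T (Suc k) \<subseteq> {1..n}"
    using assms(2,3) unfolding tabloid_def by auto
  have disj: "T k \<inter> T (Suc k) = {}" using assms(2,3) unfolding tabloid_def by auto
  have fin1: "finite (T k)" and fin2: "finite (T (Suc k))"
    using sub1 sub2 finite_subset by blast+
  have bij: "bij_betw act {1..m} (T k)" using assms(4,6) unfolding activation_ordering_def by simp
  have se: "set [1..<m + 1] = {1..m}" by auto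
  have st: "set (map act [1..<m + 1]) = T k"
    using bij se by (simp add: bij_betw_def)
  have ds: "distinct (map act [1..<m + 1])"
    using bij se by (simp add: bij_betw_def distinct_map)
  have bnd: "\<forall>y\<in>set (map act [1..<m + 1]) \<union> T (Suc k). y < n + 1"
    using st sub1 sub2 by auto
  have "charge_count (map act [1..<m + 1]) (T (Suc k)) = charge_count (sorted_list_of_set (T k)) (T (Suc k))"
    by (rule main2[OF ds _ _ fin2 _ _ bnd]) (use st fin1 disj assms(4,5) in auto)
  then show ?thesis unfolding lch_ord_def lch_def using assms(4) by simp
qed

end
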